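(* Let $g:\mathbb{R}^n\to\mathbb{R}\cup\{+\infty\}$ be a proper closed convex function and let $f=f_1-f_2$, where $f_1,f_2:\mathbb{R}^n\to\mathbb{R}$ are convex differentiable functions such that $\nabla f_1$ is Lipschitz continuous with modulus $L>0$, $\nabla f_2$ is Lipschitz continuous with modulus $l\ge 0$, and $L\ge l$. Let $F=f+g$, and assume $\inf F>-\infty$ and that this infimum is attained. Let $\mathcal X=\{x:0\in\nabla f(x)+\partial g(x)\}$ be the set of stationary points, and suppose: (a) (error bound) for any $\xi\ge\inf F$ there exist $\epsilon>0$ and $\tau>0$ such that $\operatorname{dist}(x,\mathcal X)\le\tau\|\mathrm{Prox}_{\frac1L g}(x-\tfrac1L\nabla f(x))-x\|$ whenever $\|\mathrm{Prox}_{\frac1L g}(x-\tfrac1L\nabla f(x))-x\|<\epsilon$ and $F(x)\le\xi$; (b) there exists $\delta>0$ such that $\|x-y\|\ge\delta$ whenever $x,y\in\mathcal X$ and $F(x)\ne F(y)$. Let $\{x^k\}$ be generated by Algorithm 1 (described in the context) with $\sup_k\beta_k<\sqrt{L/(L+l)}$. Then: (i) $\{x^k\}$ converges $R$-linearly to a stationary point of $F$ (a point of $\mathcal X$); (ii) the sequence $\{F(x^k)\}$ is $R$-linearly convergent.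
   Context: $\partial g$ denotes the convex subdifferential; $\operatorname{dist}(x,\mathcal X)=\inf_{y\in\mathcal X}\|x-y\|$. For a proper closed convex $h$, $\mathrm{Prox}_h(v)=\arg\min_{x\in\mathbb{R}^n}\{h(x)+\tfrac12\|x-v\|^2\}$. Algorithm 1 (proximal gradient algorithm with extrapolation): choose $x^0\in\operatorname{dom} g$ and $\{\beta_k\}\subseteq[0,\sqrt{L/(L+l)}]$, set $x^{-1}=x^0$, and for $k=0,1,2,\dots$ set $y^k=x^k+\beta_k(x^k-x^{k-1})$ and $x^{k+1}=\mathrm{Prox}_{\frac1L g}\big(y^k-\tfrac1L\nabla f(y^k)\big)$. A sequence $\{x^k\}$ converges $R$-linearly to $x^*$ if $\limsup_{k\to\infty}\|x^k-x^*\|^{1/k}<1$ (similarly for real sequences). *)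

theory Defs
  imports "HOL-Analysis.Analysis" "HOL-Library.Extended_Real" "HOL-Library.Liminf_Limsup"
begin

definition ereal_epigraph :: "('a \<Rightarrow> ereal) \<Rightarrow> ('a \<times> real) set" where
  "ereal_epigraph g = {(x, t). g x \<le> ereal t}"

definition proper_fun :: "('a \<Rightarrow> ereal) \<Rightarrow> bool" where
  "proper_fun g \<longleftrightarrow> (\<forall>x. g x \<noteq> -\<infinity>) \<and> (\<exists>x. g x \<noteq> \<infinity>)"

definition convex_efun :: "('a::real_vector \<Rightarrow> ereal) \<Rightarrow> bool" where
  "convex_efun g \<longleftrightarrow> convex (ereal_epigraph g)"

definition closed_efun :: "('a::topological_space \<Rightarrow> ereal) \<Rightarrow> bool" where
  "closed_efun g \<longleftrightarrow> closed (ereal_epigraph g)"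

definition subdiff :: "('a::real_inner \<Rightarrow> ereal) \<Rightarrow> 'a \<Rightarrow> 'a set" where
  "subdiff g x = {v. g x < \<infinity> \<and> (\<forall>y. g x + ereal (v \<bullet> (y - x)) \<le> g y)}"

definition prox :: "real \<Rightarrow> ('a::real_normed_vector \<Rightarrow> ereal) \<Rightarrow> 'a \<Rightarrow> 'a" where
  "prox c h v = (SOME x. \<forall>y. ereal c * h x + ereal ((norm (x - v))\<^sup>2 / 2)
                              \<le> ereal c * h y + ereal ((norm (y - v))\<^sup>2 / 2))"

end

theory Submission
  imports Defs
begin

lemma norm_add_sq: "(norm (a + b))\<^sup>2 = (norm a)\<^sup>2 + 2 * (a \<bullet> b) + (norm b)\<^sup>2"
  for a b :: "'a::real_inner"
  by (simp add: power2_norm_eq_inner inner_add_left inner_add_right inner_commute)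

lemma norm_diff_sq: "(norm (a - b))\<^sup>2 = (norm a)\<^sup>2 - 2 * (a \<bullet> b) + (norm b)\<^sup>2"
  for a b :: "'a::real_inner"
  by (simp add: power2_norm_eq_inner inner_diff_left inner_diff_right inner_commute)

lemma convex_tangent:
  fixes f :: "'a::real_inner \<Rightarrow> real"
  assumes cv: "convex_on UNIV f" and d: "(f has_derivative (\<lambda>h. D \<bullet> h)) (at x)"
  shows "f y \<ge> f x + D \<bullet> (y - x)"
proof -
  define \<phi> where "\<phi> t = f (x + t *\<^sub>R (y - x))" for t :: real
  have cphi: "convex_on UNIV \<phi>"
  proof (rule convex_onI)
    fix t u s :: real assume *: "0 < t" "t < 1"
    have "x + ((1 - t) *\<^sub>R u + t *\<^sub>R s) *\<^sub>R (y - x) = (1 - t) *\<^sub>R (x + u *\<^sub>R (y - x)) + t *\<^sub>R (x + s *\<^sub>R (y - x))"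
      by (simp add: algebra_simps)
    then show "\<phi> ((1 - t) *\<^sub>R u + t *\<^sub>R s) \<le> (1 - t) * \<phi> u + t * \<phi> s"
      unfolding \<phi>_def using convex_onD[OF cv, of t] * by auto
  qed simp
  have lin: "((\<lambda>t. x + t *\<^sub>R (y - x)) has_derivative (\<lambda>t. t *\<^sub>R (y - x))) (at 0)"
    by (auto intro!: derivative_eq_intros)
  have "(\<phi> has_derivative (\<lambda>t. D \<bullet> (t *\<^sub>R (y - x)))) (at 0)"
  proof -
    have d': "(f has_derivative (\<lambda>h. D \<bullet> h)) (at (x + 0 *\<^sub>R (y - x)))" using d by simp
    show ?thesis unfolding \<phi>_def using has_derivative_compose[OF lin d'] by simp
  qed
  then have "(\<phi> has_field_derivative (D \<bullet> (y - x))) (at 0)"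
    by (simp add: has_field_derivative_def mult_commute_abs)
  then have "\<phi> 1 - \<phi> 0 \<ge> (D \<bullet> (y - x)) * (1 - 0)"
    by (intro convex_on_imp_above_tangent[OF cphi]) auto
  then show ?thesis by (simp add: \<phi>_def)
qed

lemma descent:
  fixes f :: "'a::real_inner \<Rightarrow> real"
  assumes d: "\<And>z. (f has_derivative (\<lambda>h. df z \<bullet> h)) (at z)"
    and lip: "\<And>u v. norm (df u - df v) \<le> L * norm (u - v)"
  shows "f y \<le> f x + df x \<bullet> (y - x) + L / 2 * (norm (y - x))\<^sup>2"
proof -
  define h where "h = y - x"
  define \<psi> where "\<psi> t = f (x + t *\<^sub>R h) - t * (df x \<bullet> h) - L / 2 * t\<^sup>2 * (norm h)\<^sup>2" for t :: real
  define \<psi>' where "\<psi>' t = df (x + t *\<^sub>R h) \<bullet> h - df x \<bullet> h - L * t * (norm h)\<^sup>2" for t :: real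
  have der: "(\<psi> has_real_derivative \<psi>' t) (at t)" for t
  proof -
    have lin: "((\<lambda>t. x + t *\<^sub>R h) has_derivative (\<lambda>s. s *\<^sub>R h)) (at t)"
      by (auto intro!: derivative_eq_intros)
    have "((\<lambda>t. f (x + t *\<^sub>R h)) has_derivative (\<lambda>s. df (x + t *\<^sub>R h) \<bullet> (s *\<^sub>R h))) (at t)"
      using has_derivative_compose[OF lin d] by simp
    then have 1: "((\<lambda>t. f (x + t *\<^sub>R h)) has_real_derivative (df (x + t *\<^sub>R h) \<bullet> h)) (at t)"
      by (simp add: has_field_derivative_def mult_commute_abs)
    show ?thesis unfolding \<psi>_def \<psi>'_def
      by (rule 1 derivative_eq_intros refl | simp)+
  qed
  have neg: "\<psi>' t \<le> 0" if "t \<ge> 0" for t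
  proof -
    have "df (x + t *\<^sub>R h) \<bullet> h - df x \<bullet> h = (df (x + t *\<^sub>R h) - df x) \<bullet> h"
      by (simp add: inner_diff_left)
    also have "\<dots> \<le> norm (df (x + t *\<^sub>R h) - df x) * norm h" by (rule norm_cauchy_schwarz)
    also have "\<dots> \<le> L * norm (t *\<^sub>R h) * norm h"
      using lip[of "x + t *\<^sub>R h" x] by (simp add: mult_right_mono)
    also have "\<dots> = L * t * (norm h)\<^sup>2" using that by (simp add: power2_eq_square)
    finally show ?thesis unfolding \<psi>'_def by simp
  qed
  obtain z where "0 < z" "z < 1" "\<psi> 1 - \<psi> 0 = (1 - 0) * \<psi>' z"
    using MVT2[of 0 1 \<psi> \<psi>'] der by auto
  then have "\<psi> 1 \<le> \<psi> 0" using neg[of z] by simp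
  then show ?thesis unfolding \<psi>_def h_def by simp
qed

lemma geom_all:
  fixes a :: "nat \<Rightarrow> real"
  assumes s: "0 < s" and ev: "\<And>k. k \<ge> K \<Longrightarrow> a k \<le> C * s ^ k"
  shows "\<exists>C'. \<forall>k. a k \<le> C' * s ^ k"
proof -
  define C' where "C' = max C (Max ((\<lambda>k. a k / s ^ k) ` {..<K}))"
  have "a k \<le> C' * s ^ k" for k
  proof (cases "k \<ge> K")
    case True
    then have "a k \<le> C * s ^ k" by (rule ev)
    also have "\<dots> \<le> C' * s ^ k" unfolding C'_def using s by (intro mult_right_mono) auto
    finally show ?thesis .
  next
    case False
    then have "a k / s ^ k \<le> Max ((\<lambda>k. a k / s ^ k) ` {..<K})" by (intro Max_ge) auto
    then have "a k / s ^ k \<le> C'" unfolding C'_def by linarith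
    then show ?thesis using s by (simp add: divide_le_eq)
  qed
  then show ?thesis by blast
qed

lemma two_step:
  fixes r :: "nat \<Rightarrow> real"
  assumes q: "0 < q" "q < 1" and dec: "\<And>k. r (Suc k) \<le> r k"
    and step: "\<And>k. k \<ge> K \<Longrightarrow> r (k + 2) \<le> q * r k" and nn: "\<And>k. r k \<ge> 0"
  shows "\<exists>C. \<forall>k. r k \<le> C * sqrt q ^ k"
proof -
  define s where "s = sqrt q"
  have s: "0 < s" "s \<le> 1" using q unfolding s_def by auto
  have ind: "r (K + 2 * j) \<le> q ^ j * r K" for j
  proof (induction j)
    case 0 then show ?case by simp
  next
    case (Suc j)
    have "r (K + 2 * Suc j) = r ((K + 2 * j) + 2)" by simp
    also have "\<dots> \<le> q * r (K + 2 * j)" by (rule step) simp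
    also have "\<dots> \<le> q * (q ^ j * r K)" using Suc q by (intro mult_left_mono) auto
    finally show ?case by simp
  qed
  have decm: "r n \<le> r m" if "m \<le> n" for m n
    using that by (induction n rule: dec_induct) (auto intro: order_trans[OF dec])
  have "r k \<le> (r K / s ^ (K + 1)) * s ^ k" if k: "k \<ge> K" for k
  proof -
    define j where "j = (k - K) div 2"
    have "K + 2 * j \<le> k" unfolding j_def using k by linarith
    then have r1: "r k \<le> r (K + 2 * j)" by (rule decm)
    have r2: "r (K + 2 * j) \<le> q ^ j * r K" by (rule ind)
    have "q ^ j = s ^ (2 * j)" unfolding s_def using q by (simp add: power_mult real_sqrt_pow2)
    also have "s ^ (2 * j) \<le> s ^ (k - K - 1)"
      using s unfolding j_def by (intro power_decreasing) auto
    also have "s ^ (k - K - 1) \<le> s ^ k / s ^ (K + 1)"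
    proof -
      have "k - K - 1 + (K + 1) = k \<or> k = K" using k by linarith
      then show ?thesis
      proof
        assume "k - K - 1 + (K + 1) = k"
        then have "s ^ k = s ^ (k - K - 1) * s ^ (K + 1)" by (metis power_add)
        then show ?thesis using s by simp
      next
        assume "k = K"
        then show ?thesis using s by (simp add: field_simps)
      qed
    qed
    finally have "q ^ j * r K \<le> s ^ k / s ^ (K + 1) * r K" using nn[of K] by (intro mult_right_mono) auto
    then have "r k \<le> s ^ k / s ^ (K + 1) * r K" using r1 r2 by linarith
    then show ?thesis by (simp add: field_simps)
  qed
  then obtain C where "\<forall>k. r k \<le> C * s ^ k" using geom_all[OF s(1)] by blast
  then show ?thesis unfolding s_def by blast
qed

lemma geom_conv:
  fixes x :: "nat \<Rightarrow> 'a::banach"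
  assumes r: "0 \<le> \<rho>" "\<rho> < 1" and d: "\<And>k. norm (x (Suc k) - x k) \<le> C * \<rho> ^ k"
  shows "\<exists>xs. x \<longlonglongrightarrow> xs \<and> (\<forall>k. norm (x k - xs) \<le> C / (1 - \<rho>) * \<rho> ^ k)"
proof -
  define e where "e k = x (Suc k) - x k" for k
  have sg: "summable (\<lambda>k. C * \<rho> ^ k)" using r by (intro summable_mult summable_geometric) auto
  have sn: "summable (\<lambda>k. norm (e k))"
    using d unfolding e_def by (intro summable_comparison_test[OF _ sg]) auto
  then have se: "summable e" by (rule summable_norm_cancel)
  define xs where "xs = x 0 + suminf e"
  have xk: "x k = x 0 + (\<Sum>j<k. e j)" for k
    unfolding e_def by (induction k) auto
  have "(\<lambda>k. x 0 + (\<Sum>j<k. e j)) \<longlonglongrightarrow> x 0 + suminf e"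
    using se by (intro tendsto_add tendsto_const summable_LIMSEQ)
  moreover have "x = (\<lambda>k. x 0 + (\<Sum>j<k. e j))" by (rule ext) (rule xk)
  ultimately have lim: "x \<longlonglongrightarrow> xs" unfolding xs_def by simp
  have bd: "norm (x k - xs) \<le> C / (1 - \<rho>) * \<rho> ^ k" for k
  proof -
    have "suminf e = (\<Sum>j<k. e j) + (\<Sum>j. e (j + k))"
      using suminf_split_initial_segment[OF se, of k] by simp
    then have "x k - xs = - (\<Sum>j. e (j + k))" unfolding xs_def xk[of k] by simp
    then have "norm (x k - xs) = norm (\<Sum>j. e (j + k))" by simp
    also have "\<dots> \<le> (\<Sum>j. norm (e (j + k)))"
      using summable_ignore_initial_segment[OF sn, of k] by (rule summable_norm)
    also have "\<dots> \<le> (\<Sum>j. C * \<rho> ^ k * \<rho> ^ j)"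
    proof (rule suminf_le)
      show "norm (e (j + k)) \<le> C * \<rho> ^ k * \<rho> ^ j" for j
        using d[of "j + k"] unfolding e_def by (simp add: power_add mult.commute mult.left_commute)
      show "summable (\<lambda>j. norm (e (j + k)))" using summable_ignore_initial_segment[OF sn, of k] .
      show "summable (\<lambda>j. C * \<rho> ^ k * \<rho> ^ j)" using r by (intro summable_mult summable_geometric) auto
    qed
    also have "\<dots> = C * \<rho> ^ k * (1 / (1 - \<rho>))"
      using r by (subst suminf_mult) (auto simp: suminf_geometric)
    finally show ?thesis by simp
  qed
  show ?thesis using lim bd by blast
qed

lemma rlin:
  fixes a :: "nat \<Rightarrow> real"
  assumes "\<And>k. 0 \<le> a k" "\<And>k. a k \<le> C * \<rho> ^ k" "0 < \<rho>" "\<rho> < 1"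
  shows "limsup (\<lambda>k. ereal (root k (a k))) < 1"
proof -
  define C' where "C' = max C 1"
  have C': "C' > 0" unfolding C'_def by simp
  have ev: "eventually (\<lambda>k. ereal (root k (a k)) \<le> ereal (root k C' * \<rho>)) sequentially"
    using eventually_gt_at_top[of 0]
  proof eventually_elim
    case (elim k)
    have "C * \<rho> ^ k \<le> C' * \<rho> ^ k" using assms(3) unfolding C'_def by (intro mult_right_mono) auto
    then have "a k \<le> C' * \<rho> ^ k" using assms(2)[of k] by linarith
    then have "root k (a k) \<le> root k (C' * \<rho> ^ k)" using elim by (simp add: real_root_le_iff)
    also have "\<dots> = root k C' * \<rho>" using elim assms(3) by (simp add: real_root_mult real_root_power_cancel)
    finally show ?case by simp
  qed
  have "(\<lambda>k. ereal (root k C' * \<rho>)) \<longlonglongrightarrow> ereal (1 * \<rho>)"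
    by (intro tendsto_ereal tendsto_mult LIMSEQ_root_const C' tendsto_const)
  then have "limsup (\<lambda>k. ereal (root k C' * \<rho>)) = ereal \<rho>"
    by (simp add: lim_imp_Limsup)
  then have "limsup (\<lambda>k. ereal (root k (a k))) \<le> ereal \<rho>" using Limsup_mono[OF ev] by simp
  also have "\<dots> < 1" using assms(4) by simp
  finally show ?thesis .
qed

locale pg =
  fixes g :: "'a::euclidean_space \<Rightarrow> ereal"
    and f1 f2 :: "'a \<Rightarrow> real"
    and df1 df2 :: "'a \<Rightarrow> 'a"
    and L l m :: real
  assumes g_proper: "proper_fun g" and g_closed: "closed_efun g" and g_convex: "convex_efun g"
    and f1_convex: "convex_on UNIV f1" and f2_convex: "convex_on UNIV f2"
    and f1_grad: "\<And>z. (f1 has_derivative (\<lambda>h. df1 z \<bullet> h)) (at z)"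
    and f2_grad: "\<And>z. (f2 has_derivative (\<lambda>h. df2 z \<bullet> h)) (at z)"
    and L_pos: "L > 0" and l_nonneg: "l \<ge> 0" and L_ge_l: "L \<ge> l"
    and f1_lip: "\<And>u v. norm (df1 u - df1 v) \<le> L * norm (u - v)"
    and f2_lip: "\<And>u v. norm (df2 u - df2 v) \<le> l * norm (u - v)"
    and F_bnd: "\<And>z. ereal m \<le> ereal (f1 z - f2 z) + g z"
begin

definition "f z = f1 z - f2 z"
definition "gf z = df1 z - df2 z"
definition "gr z = real_of_ereal (g z)"
definition "Fr z = f z + gr z"
definition "P v = prox (1/L) g v"

lemma g_nm: "g z \<noteq> -\<infinity>"
  using g_proper unfolding proper_fun_def by auto

lemma g_fin: "g z < \<infinity> \<Longrightarrow> g z = ereal (gr z)"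
  using g_nm[of z] unfolding gr_def by (cases "g z") auto

lemma dom_ne: "\<exists>p. g p < \<infinity>"
  using g_proper unfolding proper_fun_def by (simp add: less_PInf_Ex_of_nat)

lemma g_conv:
  assumes "g a < \<infinity>" "g b < \<infinity>" "0 \<le> t" "t \<le> 1"
  shows "g ((1 - t) *\<^sub>R a + t *\<^sub>R b) \<le> ereal ((1 - t) * gr a + t * gr b)"
proof -
  have "(a, gr a) \<in> ereal_epigraph g" "(b, gr b) \<in> ereal_epigraph g"
    using g_fin assms unfolding ereal_epigraph_def by auto
  then have "(1 - t) *\<^sub>R (a, gr a) + t *\<^sub>R (b, gr b) \<in> ereal_epigraph g"
    using g_convex assms unfolding convex_efun_def by (intro convexD) auto
  then show ?thesis unfolding ereal_epigraph_def by (simp add: scaleR_Pair)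
qed

lemma g_conv_fin:
  assumes "g a < \<infinity>" "g b < \<infinity>" "0 \<le> t" "t \<le> 1"
  shows "g ((1 - t) *\<^sub>R a + t *\<^sub>R b) < \<infinity>"
  using g_conv[OF assms] by (rule le_less_trans) simp

lemma f_upper: "f y \<le> f x + gf x \<bullet> (y - x) + L / 2 * (norm (y - x))\<^sup>2"
proof -
  have "f1 y \<le> f1 x + df1 x \<bullet> (y - x) + L / 2 * (norm (y - x))\<^sup>2"
    by (rule descent[OF f1_grad f1_lip])
  moreover have "f2 y \<ge> f2 x + df2 x \<bullet> (y - x)"
    by (rule convex_tangent[OF f2_convex f2_grad])
  ultimately show ?thesis unfolding f_def gf_def by (simp add: inner_diff_left)
qed

lemma f_lower: "f y \<ge> f x + gf x \<bullet> (y - x) - l / 2 * (norm (y - x))\<^sup>2"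
proof -
  have "f2 y \<le> f2 x + df2 x \<bullet> (y - x) + l / 2 * (norm (y - x))\<^sup>2"
    by (rule descent[OF f2_grad f2_lip])
  moreover have "f1 y \<ge> f1 x + df1 x \<bullet> (y - x)"
    by (rule convex_tangent[OF f1_convex f1_grad])
  ultimately show ?thesis unfolding f_def gf_def by (simp add: inner_diff_left)
qed

lemma gf_lip: "norm (gf u - gf v) \<le> (L + l) * norm (u - v)"
proof -
  have "norm (gf u - gf v) = norm ((df1 u - df1 v) - (df2 u - df2 v))" unfolding gf_def
    by (simp add: algebra_simps)
  also have "\<dots> \<le> norm (df1 u - df1 v) + norm (df2 u - df2 v)" by (rule norm_triangle_ineq4)
  also have "\<dots> \<le> (L + l) * norm (u - v)" using f1_lip[of u v] f2_lip[of u v] by (simp add: algebra_simps)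
  finally show ?thesis .
qed

lemma Fr_lb: "g z < \<infinity> \<Longrightarrow> m \<le> Fr z"
  using F_bnd[of z] g_fin[of z] unfolding Fr_def f_def by auto

lemma gr_lb0: "g z < \<infinity> \<Longrightarrow> gr z \<ge> m - f 0 - norm (gf 0) * norm z - L / 2 * (norm z)\<^sup>2"
proof -
  assume "g z < \<infinity>"
  then have "m \<le> f z + gr z" using Fr_lb unfolding Fr_def by auto
  moreover have "f z \<le> f 0 + gf 0 \<bullet> z + L / 2 * (norm z)\<^sup>2" using f_upper[of z 0] by simp
  moreover have "gf 0 \<bullet> z \<le> norm (gf 0) * norm z" by (rule norm_cauchy_schwarz)
  ultimately show ?thesis by linarith
qed

lemma gr_lb:
  "\<exists>M K p. g p < \<infinity> \<and> K \<ge> 0 \<and> (\<forall>z. g z < \<infinity> \<longrightarrow> gr z \<ge> M - K * norm (z - p))"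
proof -
  obtain p where p: "g p < \<infinity>" using dom_ne by auto
  define M where "M = m - f 0 - norm (gf 0) * (norm p + 1) - L / 2 * (norm p + 1)\<^sup>2"
  have M: "gr z \<ge> M" if "g z < \<infinity>" "norm (z - p) \<le> 1" for z
  proof -
    have nz: "norm z \<le> norm p + 1" using that norm_triangle_ineq2[of z p] by simp
    have "norm (gf 0) * norm z \<le> norm (gf 0) * (norm p + 1)" using nz by (simp add: mult_left_mono)
    moreover have "(norm z)\<^sup>2 \<le> (norm p + 1)\<^sup>2" using nz by (simp add: power_mono)
    then have "L / 2 * (norm z)\<^sup>2 \<le> L / 2 * (norm p + 1)\<^sup>2" using L_pos by (simp add: mult_left_mono)
    ultimately show ?thesis using gr_lb0[OF that(1)] unfolding M_def by linarith
  qed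
  have Mp: "M \<le> gr p" using M[OF p] by simp
  define K where "K = gr p - M"
  have "gr z \<ge> M - K * norm (z - p)" if z: "g z < \<infinity>" for z
  proof (cases "norm (z - p) \<le> 1")
    case True
    have "0 \<le> (gr p - M) * norm (z-p)" using Mp by simp
    then show ?thesis using M[OF z True] unfolding K_def by linarith
  next
    case False
    define r where "r = norm (z - p)"
    have r1: "r > 1" using False r_def by simp
    define t where "t = 1 / r"
    have t: "0 \<le> t" "t \<le> 1" "t > 0" using r1 unfolding t_def by auto
    define z' where "z' = (1 - t) *\<^sub>R p + t *\<^sub>R z"
    have "z' - p = t *\<^sub>R (z - p)" unfolding z'_def by (simp add: algebra_simps)
    then have nz': "norm (z' - p) = 1" using t r1 unfolding t_def r_def by simp
    have "g z' \<le> ereal ((1 - t) * gr p + t * gr z)" unfolding z'_def by (rule g_conv[OF p z t(1,2)])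
    moreover have fz': "g z' < \<infinity>" unfolding z'_def by (rule g_conv_fin[OF p z t(1,2)])
    ultimately have "gr z' \<le> (1 - t) * gr p + t * gr z" using g_fin[OF fz'] by simp
    moreover have "gr z' \<ge> M" using M[OF fz'] nz' by simp
    ultimately have "M - gr p \<le> t * (gr z - gr p)" by (simp add: algebra_simps)
    then have "r * (M - gr p) \<le> r * t * (gr z - gr p)" using r1 by (simp add: mult_left_mono)
    also have "r * t = 1" using r1 unfolding t_def by simp
    finally have "r * (M - gr p) \<le> gr z - gr p" by simp
    then show ?thesis using Mp unfolding K_def r_def[symmetric] by (simp add: algebra_simps)
  qed
  moreover have "K \<ge> 0" using Mp unfolding K_def by simp
  ultimately show ?thesis using p by blast
qed

end

context pg begin

definition "psi v z = gr z / L + (norm (z - v))\<^sup>2 / 2"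

lemma prox_exists:
  "\<exists>p. g p < \<infinity> \<and> (\<forall>y. g y < \<infinity> \<longrightarrow> psi v p \<le> psi v y)"
proof -
  obtain p0 K M where p0: "g p0 < \<infinity>" and K: "K \<ge> 0" and lb: "\<And>z. g z < \<infinity> \<Longrightarrow> gr z \<ge> M - K * norm (z - p0)"
    using gr_lb by blast
  define B where "B = K / L"
  define A where "A = M / L - B * norm (p0 - v)"
  have B0: "B \<ge> 0" using K L_pos unfolding B_def by simp
  have lbpsi: "psi v z \<ge> A - B * norm (z - v) + (norm (z - v))\<^sup>2 / 2" if "g z < \<infinity>" for z
  proof -
    have 1: "gr z / L \<ge> (M - K * norm (z - p0)) / L" using lb[OF that] L_pos by (simp add: divide_right_mono)
    have "norm (z - p0) \<le> norm (z - v) + norm (p0 - v)"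
      using norm_triangle_ineq4[of "z - v" "p0 - v"] by simp
    then have "K * norm (z - p0) \<le> K * (norm (z - v) + norm (p0 - v))" using K by (simp add: mult_left_mono)
    then have 2: "K * norm (z - p0) / L \<le> K * (norm (z - v) + norm (p0 - v)) / L" using L_pos by (simp add: divide_right_mono)
    have 3: "(M - K * norm (z - p0)) / L = M / L - K * norm (z - p0) / L" by (simp add: diff_divide_distrib)
    have 4: "A - B * norm (z - v) = M / L - K * (norm (z - v) + norm (p0 - v)) / L"
      unfolding A_def B_def using L_pos by (simp add: field_simps)
    from 1 2 3 4 show ?thesis unfolding psi_def by linarith
  qed
  have lo: "psi v z \<ge> A - B\<^sup>2 / 2" if "g z < \<infinity>" for z
  proof -
    have "(norm (z - v) - B)\<^sup>2 \<ge> 0" by simp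
    then have "- B * norm (z - v) + (norm (z - v))\<^sup>2 / 2 \<ge> - B\<^sup>2 / 2"
      by (simp add: power2_diff algebra_simps)
    then show ?thesis using lbpsi[OF that] by linarith
  qed
  define D where "D = {z. g z < \<infinity>}"
  have Dne: "D \<noteq> {}" using dom_ne unfolding D_def by auto
  have bdd: "bdd_below (psi v ` D)" using lo unfolding D_def bdd_below_def by auto
  define \<mu> where "\<mu> = Inf (psi v ` D)"
  have mu_le: "\<mu> \<le> psi v z" if "g z < \<infinity>" for z
    unfolding \<mu>_def using bdd that unfolding D_def by (auto intro: cInf_lower)
  define T where "T e = {z. g z \<le> ereal (L * (\<mu> + e - (norm (z - v))\<^sup>2 / 2))}" for e
  have T_iff: "z \<in> T e \<longleftrightarrow> g z < \<infinity> \<and> psi v z \<le> \<mu> + e" for z e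
  proof
    assume "z \<in> T e"
    then have z: "g z \<le> ereal (L * (\<mu> + e - (norm (z - v))\<^sup>2 / 2))" unfolding T_def by simp
    then have fin: "g z < \<infinity>" by (rule le_less_trans) simp
    then have "gr z \<le> L * (\<mu> + e - (norm (z - v))\<^sup>2 / 2)" using z g_fin[OF fin] by simp
    then show "g z < \<infinity> \<and> psi v z \<le> \<mu> + e" using fin L_pos unfolding psi_def by (simp add: field_simps)
  next
    assume H: "g z < \<infinity> \<and> psi v z \<le> \<mu> + e"
    then have "gr z \<le> L * (\<mu> + e - (norm (z - v))\<^sup>2 / 2)" using L_pos unfolding psi_def by (auto simp add: field_simps)
    then show "z \<in> T e" unfolding T_def using g_fin[OF conjunct1[OF H]] by simp
  qed
  have T_closed: "closed (T e)" for e
  proof -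
    have "T e = (\<lambda>z. (z, L * (\<mu> + e - (norm (z - v))\<^sup>2 / 2))) -` ereal_epigraph g"
      unfolding T_def ereal_epigraph_def by auto
    moreover have "closed ((\<lambda>z. (z, L * (\<mu> + e - (norm (z - v))\<^sup>2 / 2))) -` ereal_epigraph g)"
      using g_closed unfolding closed_efun_def
      by (intro continuous_closed_vimage) (auto intro!: continuous_intros)
    ultimately show ?thesis by simp
  qed
  have T_ne: "T e \<noteq> {}" if "e > 0" for e
  proof -
    have "\<mu> < \<mu> + e" using that by simp
    have ne: "psi v ` D \<noteq> {}" using Dne by simp
    have "\<exists>y\<in>psi v ` D. y < \<mu> + e" using \<open>\<mu> < \<mu> + e\<close> unfolding \<mu>_def by (rule cInf_lessD[OF ne])
    then obtain y where "y \<in> psi v ` D" "y < \<mu> + e" by blast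
    then show ?thesis using T_iff unfolding D_def by force
  qed
  have T_mono: "T e \<subseteq> T e'" if "e \<le> e'" for e e'
    using that T_iff by auto
  define c where "c = \<mu> + 1 - A"
  define R where "R = 2 * B + 2 * \<bar>c\<bar> + 2"
  have T1_bd: "T 1 \<subseteq> cball v R"
  proof
    fix z assume "z \<in> T 1"
    then have z: "g z < \<infinity>" "psi v z \<le> \<mu> + 1" using T_iff by auto
    define r where "r = norm (z - v)"
    have ineq: "r * (r / 2 - B) \<le> c" using lbpsi[OF z(1)] z(2) unfolding c_def r_def[symmetric]
      by (simp add: algebra_simps power2_eq_square)
    have "r < R"
    proof (rule ccontr)
      assume "\<not> r < R"
      then have "r \<ge> R" by simp
      then have r1: "r \<ge> 1" and r2: "r / 2 - B \<ge> \<bar>c\<bar> + 1" using B0 unfolding R_def by auto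
      have "r * (r / 2 - B) \<ge> 1 * (\<bar>c\<bar> + 1)" using r1 r2 by (intro mult_mono) auto
      then have "\<bar>c\<bar> + 1 \<le> c" using ineq by simp
      then show False by simp
    qed
    then show "z \<in> cball v R" unfolding r_def by (simp add: dist_norm norm_minus_commute)
  qed
  have cT1: "compact (T 1)"
    by (simp add: compact_eq_bounded_closed T_closed bounded_subset[OF bounded_cball T1_bd])
  have "T 1 \<inter> \<Inter> (T ` {0<..1}) \<noteq> {}"
  proof (rule compact_imp_fip[OF cT1])
    show "closed S" if "S \<in> T ` {0<..1}" for S using that T_closed by auto
  next
    fix F' assume F': "finite F'" "F' \<subseteq> T ` {0<..1}"
    then obtain E where E: "E \<subseteq> {0<..1}" "finite E" "F' = T ` E"
      using finite_subset_image[OF F'] by blast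
    show "T 1 \<inter> \<Inter> F' \<noteq> {}"
    proof (cases "E = {}")
      case True then show ?thesis using E T_ne[of 1] by simp
    next
      case False
      define e0 where "e0 = Min E"
      have e0: "e0 \<in> E" "\<And>e. e \<in> E \<Longrightarrow> e0 \<le> e" unfolding e0_def using E False by auto
      have "e0 \<le> 1" using e0 E by auto
      then have "T e0 \<subseteq> T 1" by (rule T_mono)
      moreover have "T e0 \<subseteq> T e" if "e \<in> E" for e using e0(2)[OF that] by (rule T_mono)
      ultimately have "T e0 \<subseteq> T 1 \<inter> \<Inter> F'" using E by auto
      moreover have "T e0 \<noteq> {}" using T_ne e0 E by auto
      ultimately show ?thesis by blast
    qed
  qed
  then obtain p where p: "p \<in> T 1" "\<And>e. e \<in> {0<..1} \<Longrightarrow> p \<in> T e" by blast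
  have gp: "g p < \<infinity>" using p T_iff by auto
  have "psi v p \<le> \<mu>"
  proof (rule field_le_epsilon)
    fix e :: real assume "e > 0"
    show "psi v p \<le> \<mu> + e"
    proof (cases "e \<le> 1")
      case True then show ?thesis using p(2)[of e] \<open>e > 0\<close> T_iff by auto
    next
      case False then show ?thesis using p(1) T_iff by auto
    qed
  qed
  then show ?thesis using gp mu_le by force
qed

lemma P_prop: "g (P v) < \<infinity>" "g y < \<infinity> \<Longrightarrow> psi v (P v) \<le> psi v y"
proof -
  obtain p where p: "g p < \<infinity>" "\<And>y. g y < \<infinity> \<Longrightarrow> psi v p \<le> psi v y" using prox_exists by blast
  define Q where "Q x \<longleftrightarrow> (\<forall>y. ereal (1/L) * g x + ereal ((norm (x - v))\<^sup>2 / 2)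
                              \<le> ereal (1/L) * g y + ereal ((norm (y - v))\<^sup>2 / 2))" for x
  have eqfin: "ereal (1/L) * g x + ereal ((norm (x - v))\<^sup>2 / 2) = ereal (psi v x)" if "g x < \<infinity>" for x
    using g_fin[OF that] unfolding psi_def by simp
  have eqinf: "ereal (1/L) * g x + ereal ((norm (x - v))\<^sup>2 / 2) = \<infinity>" if "\<not> g x < \<infinity>" for x
    using that L_pos by (simp add: ereal_mult_infty)
  have "Q p" unfolding Q_def
  proof
    fix y show "ereal (1/L) * g p + ereal ((norm (p - v))\<^sup>2 / 2) \<le> ereal (1/L) * g y + ereal ((norm (y - v))\<^sup>2 / 2)"
      using p eqfin eqinf by (cases "g y < \<infinity>") auto
  qed
  then have QP: "Q (P v)" unfolding P_def prox_def Q_def[symmetric] by (rule someI)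
  have "ereal (1/L) * g (P v) + ereal ((norm (P v - v))\<^sup>2 / 2) \<le> ereal (psi v p)"
    using QP p eqfin unfolding Q_def by metis
  then show fin: "g (P v) < \<infinity>" using eqinf by force
  assume "g y < \<infinity>"
  then show "psi v (P v) \<le> psi v y" using QP eqfin fin unfolding Q_def by (metis ereal_less_eq(3))
qed

lemma P_var:
  assumes z: "g z < \<infinity>"
  shows "(v - P v) \<bullet> (z - P v) \<le> (gr z - gr (P v)) / L"
proof (rule ccontr)
  define p where "p = P v"
  define w where "w = z - p"
  define Q where "Q = (gr z - gr p) / L - (v - p) \<bullet> w"
  assume "\<not> ?thesis"
  then have Q: "Q < 0" unfolding Q_def p_def w_def by simp
  have w0: "w \<noteq> 0" using Q unfolding Q_def w_def by auto
  then have nw: "(norm w)\<^sup>2 > 0" by simp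
  define t where "t = min 1 (- Q / (norm w)\<^sup>2)"
  have t: "0 < t" "t \<le> 1" "t * (norm w)\<^sup>2 \<le> - Q" using Q nw unfolding t_def
    by (auto simp: min_def field_simps)
  have gp: "g p < \<infinity>" unfolding p_def by (rule P_prop)
  define zt where "zt = (1 - t) *\<^sub>R p + t *\<^sub>R z"
  have zt_eq: "zt = p + t *\<^sub>R w" unfolding zt_def w_def by (simp add: algebra_simps)
  have gzt: "g zt < \<infinity>" unfolding zt_def using gp z t by (intro g_conv_fin) auto
  have c1: "gr zt \<le> (1 - t) * gr p + t * gr z"
    using g_conv[OF gp z, of t] t g_fin[OF gzt] unfolding zt_def by simp
  have c2: "psi v p \<le> psi v zt" unfolding p_def by (rule P_prop(2)[OF gzt[unfolded p_def]])
  have c3: "(norm (zt - v))\<^sup>2 = (norm (p - v))\<^sup>2 + 2 * (t * ((p - v) \<bullet> w)) + t\<^sup>2 * (norm w)\<^sup>2"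
  proof -
    have eq: "zt - v = (p - v) + t *\<^sub>R w" unfolding zt_eq by simp
    have "(norm (zt - v))\<^sup>2 = (norm ((p - v) + t *\<^sub>R w))\<^sup>2" by (simp only: eq)
    also have "\<dots> = (norm (p - v))\<^sup>2 + 2 * (t * ((p - v) \<bullet> w)) + t\<^sup>2 * (norm w)\<^sup>2"
      using norm_add_sq[of "p - v" "t *\<^sub>R w"] by (simp add: power_mult_distrib)
    finally show ?thesis .
  qed
  have h1: "gr p / L \<le> gr zt / L + t * ((p - v) \<bullet> w) + t\<^sup>2 * (norm w)\<^sup>2 / 2"
    using c2 c3 unfolding psi_def by linarith
  have h2: "gr zt / L \<le> ((1 - t) * gr p + t * gr z) / L" using c1 L_pos by (simp add: divide_right_mono)
  have h3: "((1 - t) * gr p + t * gr z) / L = gr p / L + t * (gr z - gr p) / L"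
    by (simp add: algebra_simps add_divide_distrib diff_divide_distrib)
  have "0 \<le> t * (gr z - gr p) / L + t * ((p - v) \<bullet> w) + t\<^sup>2 * (norm w)\<^sup>2 / 2"
    using h1 h2 h3 by linarith
  also have "t * (gr z - gr p) / L + t * ((p - v) \<bullet> w) = t * Q"
    unfolding Q_def by (simp add: algebra_simps inner_diff_left)
  finally have "0 \<le> t * (Q + t * (norm w)\<^sup>2 / 2)" by (simp add: algebra_simps power2_eq_square)
  then have "0 \<le> Q + t * (norm w)\<^sup>2 / 2" using t by (simp add: zero_le_mult_iff)
  then show False using t Q by linarith
qed

end

context pg begin

definition "T z = P (z - (1/L) *\<^sub>R gf z)"
definition "Xs = {z. - gf z \<in> subdiff g z}"

lemma divL: "a / L \<le> b / L \<Longrightarrow> a \<le> b" using L_pos by (simp add: divide_le_cancel)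

lemma P_fin: "g (P v) < \<infinity>" by (rule P_prop(1))

lemma P_nonexp: "norm (P u - P v) \<le> norm (u - v)"
proof -
  define p q where "p = P u" and "q = P v"
  have 1: "(u - p) \<bullet> (q - p) \<le> (gr q - gr p) / L" unfolding p_def q_def by (rule P_var[OF P_fin])
  have 2: "(v - q) \<bullet> (p - q) \<le> (gr p - gr q) / L" unfolding p_def q_def by (rule P_var[OF P_fin])
  have "(gr q - gr p) / L + (gr p - gr q) / L = 0" by (simp add: divide_simps)
  then have "(u - p) \<bullet> (q - p) + (v - q) \<bullet> (p - q) \<le> 0" using 1 2 by linarith
  moreover have "(u - p) \<bullet> (q - p) + (v - q) \<bullet> (p - q) = (norm (p - q))\<^sup>2 - (u - v) \<bullet> (p - q)"
    by (simp add: power2_norm_eq_inner inner_diff_left inner_diff_right inner_commute algebra_simps)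
  ultimately have "(norm (p - q))\<^sup>2 \<le> (u - v) \<bullet> (p - q)" by linarith
  also have "\<dots> \<le> norm (u - v) * norm (p - q)" by (rule norm_cauchy_schwarz)
  finally have "norm (p - q) * norm (p - q) \<le> norm (u - v) * norm (p - q)" by (simp add: power2_eq_square)
  then have "norm (p - q) \<le> norm (u - v)"
    by (cases "norm (p - q) = 0") (auto simp: mult_le_cancel_right)
  then show ?thesis unfolding p_def q_def .
qed

lemma key_ineq:
  assumes z: "g z < \<infinity>"
  shows "Fr (P (y - (1/L) *\<^sub>R gf y)) \<le> Fr z + (L + l) / 2 * (norm (z - y))\<^sup>2 - L / 2 * (norm (z - P (y - (1/L) *\<^sub>R gf y)))\<^sup>2"
proof -
  define p where "p = P (y - (1/L) *\<^sub>R gf y)"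
  have var: "(y - (1/L) *\<^sub>R gf y - p) \<bullet> (z - p) \<le> (gr z - gr p) / L"
    unfolding p_def by (rule P_var[OF z])
  have e1: "(y - (1/L) *\<^sub>R gf y - p) \<bullet> (z - p) = (y - p) \<bullet> (z - p) - (gf y \<bullet> (z - p)) / L"
    by (simp add: inner_diff_left)
  have var2: "L * ((y - p) \<bullet> (z - p)) - gf y \<bullet> (z - p) \<le> gr z - gr p"
  proof -
    have "(y - p) \<bullet> (z - p) - (gf y \<bullet> (z - p)) / L \<le> (gr z - gr p) / L" using var e1 by simp
    then have "L * ((y - p) \<bullet> (z - p) - (gf y \<bullet> (z - p)) / L) \<le> L * ((gr z - gr p) / L)"
      using L_pos by (intro mult_left_mono) auto
    moreover have "L * ((y - p) \<bullet> (z - p) - (gf y \<bullet> (z - p)) / L) = L * ((y - p) \<bullet> (z - p)) - gf y \<bullet> (z - p)"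
      using L_pos by (simp add: field_simps)
    moreover have "L * ((gr z - gr p) / L) = gr z - gr p" using L_pos by simp
    ultimately show ?thesis by simp
  qed
  have up: "f p \<le> f y + gf y \<bullet> (p - y) + L / 2 * (norm (p - y))\<^sup>2" by (rule f_upper)
  have lo: "f z \<ge> f y + gf y \<bullet> (z - y) - l / 2 * (norm (z - y))\<^sup>2" by (rule f_lower)
  define a where "a = (z - p) \<bullet> (p - y)"
  have sq: "(norm (z - y))\<^sup>2 = (norm (z - p))\<^sup>2 + 2 * a + (norm (p - y))\<^sup>2"
    using norm_add_sq[of "z - p" "p - y"] unfolding a_def by simp
  have i1: "gf y \<bullet> (p - y) + gf y \<bullet> (z - p) = gf y \<bullet> (z - y)"
    by (simp add: inner_diff_right)
  have i2: "(y - p) \<bullet> (z - p) = - a" unfolding a_def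
    by (simp add: inner_diff_left inner_diff_right inner_commute)
  define N1 N2 N3 where "N1 = (norm (p - y))\<^sup>2" and "N2 = (norm (z - y))\<^sup>2" and "N3 = (norm (z - p))\<^sup>2"
  define b1 b2 b3 c where "b1 = gf y \<bullet> (p - y)" and "b2 = gf y \<bullet> (z - p)" and "b3 = gf y \<bullet> (z - y)"
    and "c = (y - p) \<bullet> (z - p)"
  have eqL: "L / 2 * N1 - L * c = L / 2 * N2 - L / 2 * N3"
    unfolding c_def i2 N1_def N2_def N3_def sq by (simp add: algebra_simps)
  have eqL2: "(L + l) / 2 * N2 = L / 2 * N2 + l / 2 * N2" by (simp add: algebra_simps)
  have "f p + gr p \<le> f z + gr z + (L + l) / 2 * N2 - L / 2 * N3"
    using up lo var2 i1 eqL eqL2 unfolding N1_def[symmetric] N2_def[symmetric] N3_def[symmetric]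
      b1_def[symmetric] b2_def[symmetric] b3_def[symmetric] c_def[symmetric] by linarith
  then show ?thesis unfolding p_def Fr_def N2_def N3_def .
qed

lemma stat_imp_fix:
  assumes "z \<in> Xs" shows "T z = z"
proof -
  define v where "v = z - (1/L) *\<^sub>R gf z"
  define p where "p = P v"
  have sd: "g z < \<infinity>" "\<And>y. g z + ereal ((- gf z) \<bullet> (y - z)) \<le> g y"
    using assms unfolding Xs_def subdiff_def by auto
  have "g z + ereal ((- gf z) \<bullet> (p - z)) \<le> g p" by (rule sd(2))
  then have 1: "gr z - gf z \<bullet> (p - z) \<le> gr p" using g_fin[OF sd(1)] g_fin[OF P_fin[of v]] unfolding p_def by simp
  have 2: "(v - p) \<bullet> (z - p) \<le> (gr z - gr p) / L" unfolding p_def by (rule P_var[OF sd(1)])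
  have "(v - z) \<bullet> (p - z) = (- (gf z \<bullet> (p - z))) / L" unfolding v_def by (simp add: inner_diff_left)
  also have "\<dots> \<le> (gr p - gr z) / L" using 1 L_pos by (intro divide_right_mono) auto
  finally have 3: "(v - z) \<bullet> (p - z) \<le> (gr p - gr z) / L" .
  have "(gr z - gr p) / L + (gr p - gr z) / L = 0" by (simp add: divide_simps)
  then have "(v - p) \<bullet> (z - p) + (v - z) \<bullet> (p - z) \<le> 0" using 2 3 by linarith
  moreover have "(v - p) \<bullet> (z - p) + (v - z) \<bullet> (p - z) = (norm (z - p))\<^sup>2"
    by (simp add: power2_norm_eq_inner inner_diff_left inner_diff_right inner_commute algebra_simps)
  ultimately have "norm (z - p) = 0" by simp
  then show ?thesis unfolding T_def p_def v_def by simp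
qed

lemma fix_imp_stat:
  assumes "T z = z" shows "z \<in> Xs"
proof -
  define v where "v = z - (1/L) *\<^sub>R gf z"
  have pz: "P v = z" using assms unfolding T_def v_def by simp
  have gz: "g z < \<infinity>" using P_fin[of v] pz by simp
  have "g z + ereal ((- gf z) \<bullet> (y - z)) \<le> g y" for y
  proof (cases "g y < \<infinity>")
    case True
    have "(v - z) \<bullet> (y - z) \<le> (gr y - gr z) / L" using P_var[OF True, of v] pz by simp
    moreover have "(v - z) \<bullet> (y - z) = ((- gf z) \<bullet> (y - z)) / L" unfolding v_def by (simp add: inner_diff_left)
    ultimately have "((- gf z) \<bullet> (y - z)) / L \<le> (gr y - gr z) / L" by simp
    then have "(- gf z) \<bullet> (y - z) \<le> gr y - gr z" by (rule divL)
    then show ?thesis using g_fin[OF gz] g_fin[OF True] by simp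
  next
    case False then show ?thesis by simp
  qed
  then show ?thesis using gz unfolding Xs_def subdiff_def by auto
qed

lemma Xs_iff: "z \<in> Xs \<longleftrightarrow> T z = z" using stat_imp_fix fix_imp_stat by blast

lemma T_cont: "continuous_on UNIV T"
proof -
  have "norm (T u - T v) \<le> (1 + (L + l) / L) * norm (u - v)" for u v
  proof -
    have "norm (T u - T v) \<le> norm ((u - (1/L) *\<^sub>R gf u) - (v - (1/L) *\<^sub>R gf v))"
      unfolding T_def by (rule P_nonexp)
    also have "\<dots> = norm ((u - v) - (1/L) *\<^sub>R (gf u - gf v))" by (simp add: algebra_simps)
    also have "\<dots> \<le> norm (u - v) + norm ((1/L) *\<^sub>R (gf u - gf v))" by (rule norm_triangle_ineq4)
    also have "norm ((1/L) *\<^sub>R (gf u - gf v)) = norm (gf u - gf v) / L" using L_pos by simp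
    also have "\<dots> \<le> (L + l) * norm (u - v) / L" using gf_lip L_pos by (simp add: divide_right_mono)
    finally show ?thesis by (simp add: algebra_simps)
  qed
  then have "(1 + (L + l) / L)-lipschitz_on UNIV T"
    using L_pos l_nonneg by (intro lipschitz_onI) (auto simp: dist_norm)
  then show ?thesis by (rule lipschitz_on_continuous_on)
qed

lemma Xs_closed: "closed Xs"
proof -
  have "Xs = {z. T z - z = 0}" using Xs_iff by auto
  moreover have "closed {z. T z - z = 0}"
    by (rule closed_Collect_eq) (auto intro!: continuous_intros T_cont)
  ultimately show ?thesis by simp
qed

lemma stat_lower:
  assumes u: "u \<in> Xs" and x: "g x < \<infinity>"
  shows "Fr x \<ge> Fr u - l / 2 * (norm (x - u))\<^sup>2"
proof -
  have sd: "g u < \<infinity>" "g u + ereal ((- gf u) \<bullet> (x - u)) \<le> g x"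
    using u unfolding Xs_def subdiff_def by auto
  then have 1: "gr u - gf u \<bullet> (x - u) \<le> gr x" using g_fin[OF sd(1)] g_fin[OF x] by simp
  have 2: "f x \<ge> f u + gf u \<bullet> (x - u) - l / 2 * (norm (x - u))\<^sup>2" by (rule f_lower)
  show ?thesis unfolding Fr_def using 1 2 by linarith
qed

lemma min_imp_stat:
  assumes gz: "g z < \<infinity>" and min: "\<And>y. g y < \<infinity> \<Longrightarrow> Fr z \<le> Fr y"
  shows "z \<in> Xs"
proof -
  have "Fr (T z) \<le> Fr z + (L + l) / 2 * (norm (z - z))\<^sup>2 - L / 2 * (norm (z - T z))\<^sup>2"
    unfolding T_def by (rule key_ineq[OF gz])
  moreover have "Fr z \<le> Fr (T z)" unfolding T_def by (rule min[OF P_fin])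
  ultimately have "L / 2 * (norm (z - T z))\<^sup>2 \<le> 0" by simp
  then have "norm (z - T z) = 0" using L_pos by (simp add: mult_le_0_iff)
  then show ?thesis using Xs_iff by simp
qed

end

locale pgseq = pg +
  fixes x :: "nat \<Rightarrow> 'a" and \<beta> :: "nat \<Rightarrow> real" and b \<epsilon> \<tau> \<delta> :: real
  assumes x0: "g (x 0) < \<infinity>"
    and beta: "\<And>k. 0 \<le> \<beta> k \<and> \<beta> k \<le> b" and b_lt: "b < sqrt (L / (L + l))"
    and iter: "\<And>k. x (Suc k) = P ((x k + \<beta> k *\<^sub>R (x k - x (k - 1)))
                  - (1/L) *\<^sub>R gf (x k + \<beta> k *\<^sub>R (x k - x (k - 1))))"
    and eps: "\<epsilon> > 0" and tau: "\<tau> > 0"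
    and eb: "\<And>z. norm (T z - z) < \<epsilon> \<Longrightarrow> g z < \<infinity> \<Longrightarrow> Fr z \<le> Fr (x 0) \<Longrightarrow> infdist z Xs \<le> \<tau> * norm (T z - z)"
    and delta: "\<delta> > 0" and sep: "\<And>u v. u \<in> Xs \<Longrightarrow> v \<in> Xs \<Longrightarrow> Fr u \<noteq> Fr v \<Longrightarrow> norm (u - v) \<ge> \<delta>"
    and Xs_ne: "Xs \<noteq> {}"
begin

definition "y k = x k + \<beta> k *\<^sub>R (x k - x (k - 1))"
definition "d k = x k - x (k - 1)"
definition "H k = Fr (x k) + L / 2 * (norm (d k))\<^sup>2"
definition "c0 = (L - (L + l) * b\<^sup>2) / 2"

lemma b0: "0 \<le> b" using beta[of 0] by simp

lemma b1: "b \<le> 1"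
proof -
  have "L / (L + l) \<le> 1" using L_pos l_nonneg by simp
  then have "sqrt (L / (L + l)) \<le> 1" by simp
  then show ?thesis using b_lt by linarith
qed

lemma c0_pos: "c0 > 0"
proof -
  have "b\<^sup>2 < (sqrt (L / (L + l)))\<^sup>2" using b0 b_lt by (intro power_strict_mono) auto
  also have "\<dots> = L / (L + l)" using L_pos l_nonneg by simp
  finally have "(L + l) * b\<^sup>2 < L" using L_pos l_nonneg by (simp add: field_simps)
  then show ?thesis unfolding c0_def by simp
qed

lemma x_suc: "x (Suc k) = T (y k)" unfolding T_def y_def by (rule iter)

lemma d_suc: "d (Suc k) = x (Suc k) - x k" unfolding d_def by simp

lemma d0: "d 0 = 0" unfolding d_def by simp

lemma xy: "x k - y k = - (\<beta> k *\<^sub>R d k)" unfolding y_def d_def by simp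

lemma norm_xy: "norm (x k - y k) \<le> b * norm (d k)"
  using beta[of k] unfolding xy by (simp add: mult_right_mono)

lemma norm_xy1: "norm (x k - y k) \<le> norm (d k)"
  using norm_xy[of k] mult_left_le_one_le[of "norm (d k)" b] b0 b1 by simp

lemma xfin: "g (x k) < \<infinity>"
proof (cases k)
  case 0 then show ?thesis using x0 by simp
next
  case (Suc j) then show ?thesis using P_fin[of "y j - (1/L) *\<^sub>R gf (y j)"] x_suc[of j] unfolding T_def by simp
qed

lemma H0: "H 0 = Fr (x 0)" unfolding H_def d0 by simp

lemma H_dec: "H (Suc k) + c0 * (norm (d k))\<^sup>2 \<le> H k"
proof -
  have "Fr (x (Suc k)) \<le> Fr (x k) + (L + l) / 2 * (norm (x k - y k))\<^sup>2 - L / 2 * (norm (x k - x (Suc k)))\<^sup>2"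
    unfolding x_suc T_def by (rule key_ineq[OF xfin])
  moreover have "(norm (x k - y k))\<^sup>2 \<le> (b * norm (d k))\<^sup>2"
    by (rule power_mono[OF norm_xy]) simp
  then have "(norm (x k - y k))\<^sup>2 \<le> b\<^sup>2 * (norm (d k))\<^sup>2" by (simp add: power_mult_distrib)
  then have "(L + l) / 2 * (norm (x k - y k))\<^sup>2 \<le> (L + l) / 2 * (b\<^sup>2 * (norm (d k))\<^sup>2)"
    using L_pos l_nonneg by (intro mult_left_mono) auto
  moreover have "norm (x k - x (Suc k)) = norm (d (Suc k))" unfolding d_suc by (simp add: norm_minus_commute)
  ultimately have "Fr (x (Suc k)) + L / 2 * (norm (d (Suc k)))\<^sup>2 \<le> Fr (x k) + (L + l) / 2 * (b\<^sup>2 * (norm (d k))\<^sup>2)"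
    by simp
  moreover have "(L + l) / 2 * (b\<^sup>2 * (norm (d k))\<^sup>2) = L / 2 * (norm (d k))\<^sup>2 - c0 * (norm (d k))\<^sup>2"
    unfolding c0_def by (simp add: field_simps)
  ultimately show ?thesis unfolding H_def by linarith
qed

lemma H_decseq: "H (Suc k) \<le> H k"
proof -
  have "c0 * (norm (d k))\<^sup>2 \<ge> 0" using c0_pos by simp
  then show ?thesis using H_dec[of k] by linarith
qed

lemma H_mono: "k \<le> j \<Longrightarrow> H j \<le> H k"
  by (induction j rule: dec_induct) (auto intro: order_trans[OF H_decseq])

lemma Fr_le_H: "Fr (x k) \<le> H k" unfolding H_def using L_pos by simp

lemma H_lb: "H k \<ge> m"
  using Fr_lb[OF xfin, of k] Fr_le_H[of k] by linarith

lemma Fr_le_0: "Fr (x k) \<le> Fr (x 0)" using Fr_le_H[of k] H_mono[of 0 k] H0 by simp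

lemma d_lim: "(\<lambda>k. norm (d k)) \<longlonglongrightarrow> 0"
proof -
  have "decseq H" using H_decseq by (simp add: decseq_SucI)
  then obtain h where h: "H \<longlonglongrightarrow> h" using H_lb by (metis decseq_convergent)
  then have "(\<lambda>k. H k - H (Suc k)) \<longlonglongrightarrow> h - h"
    by (intro tendsto_diff h LIMSEQ_Suc[OF h])
  then have lim: "(\<lambda>k. (H k - H (Suc k)) / c0) \<longlonglongrightarrow> 0" by (simp add: tendsto_divide_zero)
  have le: "(norm (d k))\<^sup>2 \<le> (H k - H (Suc k)) / c0" for k
    using H_dec[of k] c0_pos by (simp add: field_simps)
  have e1: "\<forall>\<^sub>F k in sequentially. (0::real) \<le> (norm (d k))\<^sup>2" by simp
  have e2: "\<forall>\<^sub>F k in sequentially. (norm (d k))\<^sup>2 \<le> (H k - H (Suc k)) / c0"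
    by (intro always_eventually allI le)
  have "(\<lambda>k. (norm (d k))\<^sup>2) \<longlonglongrightarrow> 0"
    by (rule tendsto_sandwich[OF e1 e2 tendsto_const lim])
  then have "(\<lambda>k. sqrt ((norm (d k))\<^sup>2)) \<longlonglongrightarrow> sqrt 0" by (rule tendsto_real_sqrt)
  then show ?thesis by simp
qed

lemma res_bd: "norm (T (x k) - x k) \<le> 3 * norm (d k) + norm (d (Suc k))"
proof -
  have "norm (T (x k) - x (Suc k)) \<le> norm ((x k - (1/L) *\<^sub>R gf (x k)) - (y k - (1/L) *\<^sub>R gf (y k)))"
    unfolding x_suc T_def by (rule P_nonexp)
  also have "\<dots> = norm ((x k - y k) - (1/L) *\<^sub>R (gf (x k) - gf (y k)))" by (simp add: algebra_simps)
  also have "\<dots> \<le> norm (x k - y k) + norm ((1/L) *\<^sub>R (gf (x k) - gf (y k)))" by (rule norm_triangle_ineq4)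
  also have "norm ((1/L) *\<^sub>R (gf (x k) - gf (y k))) = norm (gf (x k) - gf (y k)) / L" using L_pos by simp
  also have "\<dots> \<le> (L + l) * norm (x k - y k) / L" using gf_lip L_pos by (simp add: divide_right_mono)
  also have "(L + l) * norm (x k - y k) / L \<le> 2 * norm (x k - y k)"
    using L_pos L_ge_l by (simp add: field_simps mult_right_mono)
  finally have "norm (T (x k) - x (Suc k)) \<le> 3 * norm (x k - y k)" by simp
  also have "\<dots> \<le> 3 * norm (d k)" using norm_xy1[of k] by simp
  finally have 1: "norm (T (x k) - x (Suc k)) \<le> 3 * norm (d k)" .
  have "norm (T (x k) - x k) \<le> norm (T (x k) - x (Suc k)) + norm (x (Suc k) - x k)"
    using norm_triangle_ineq[of "T (x k) - x (Suc k)" "x (Suc k) - x k"] by simp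
  then show ?thesis using 1 unfolding d_suc by simp
qed

end

context pgseq begin

lemma sum_sq: "(a + c)\<^sup>2 \<le> 2 * a\<^sup>2 + 2 * c\<^sup>2" for a c :: real
proof -
  have "0 \<le> (a - c)\<^sup>2" by simp
  then show ?thesis by (simp add: power2_diff power2_sum)
qed

lemma eb_ev: "\<exists>K. \<forall>k\<ge>K. infdist (x k) Xs \<le> \<tau> * (3 * norm (d k) + norm (d (Suc k)))"
proof -
  have "(\<lambda>k. 3 * norm (d k) + norm (d (Suc k))) \<longlonglongrightarrow> 3 * 0 + 0"
    using d_lim by (intro tendsto_add tendsto_mult tendsto_const LIMSEQ_Suc)
  then have "eventually (\<lambda>k. 3 * norm (d k) + norm (d (Suc k)) < \<epsilon>) sequentially"
    using eps by (intro order_tendstoD(2)) auto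
  then obtain K where K: "\<And>k. k \<ge> K \<Longrightarrow> 3 * norm (d k) + norm (d (Suc k)) < \<epsilon>"
    unfolding eventually_sequentially by blast
  have "infdist (x k) Xs \<le> \<tau> * (3 * norm (d k) + norm (d (Suc k)))" if "k \<ge> K" for k
  proof -
    have r: "norm (T (x k) - x k) < \<epsilon>" using res_bd[of k] K[OF that] by linarith
    have "infdist (x k) Xs \<le> \<tau> * norm (T (x k) - x k)" by (rule eb[OF r xfin Fr_le_0])
    also have "\<dots> \<le> \<tau> * (3 * norm (d k) + norm (d (Suc k)))" using tau res_bd[of k] by (intro mult_left_mono) auto
    finally show ?thesis .
  qed
  then show ?thesis by blast
qed

lemma main:
  shows "(\<exists>xs\<in>Xs. limsup (\<lambda>k. ereal (root k (norm (x k - xs)))) < 1)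
       \<and> (\<exists>\<zeta>. limsup (\<lambda>k. ereal (root k \<bar>Fr (x k) - \<zeta>\<bar>)) < 1)"
proof -
  obtain K1 where K1: "\<And>k. k \<ge> K1 \<Longrightarrow> infdist (x k) Xs \<le> \<tau> * (3 * norm (d k) + norm (d (Suc k)))"
    using eb_ev by blast
  define D where "D k = norm (d k)" for k
  define dist' where "dist' k = infdist (x k) Xs" for k
  have dist_nn: "dist' k \<ge> 0" for k unfolding dist'_def by (rule infdist_nonneg)
  have dist_lim: "dist' \<longlonglongrightarrow> 0"
  proof -
    have lim: "(\<lambda>k. \<tau> * (3 * norm (d k) + norm (d (Suc k)))) \<longlonglongrightarrow> \<tau> * (3 * 0 + 0)"
      using d_lim by (intro tendsto_add tendsto_mult tendsto_const LIMSEQ_Suc)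
    have e1: "\<forall>\<^sub>F k in sequentially. 0 \<le> dist' k" using dist_nn by simp
    have e2: "\<forall>\<^sub>F k in sequentially. dist' k \<le> \<tau> * (3 * norm (d k) + norm (d (Suc k)))"
      unfolding eventually_sequentially dist'_def using K1 by blast
    show ?thesis using tendsto_sandwich[OF e1 e2 tendsto_const] lim by simp
  qed
  have ex_u: "\<exists>z. z \<in> Xs \<and> infdist (x k) Xs = dist (x k) z" for k
    using infdist_attains_inf[OF Xs_closed Xs_ne, of "x k"] by blast
  define u where "u k = (SOME z. z \<in> Xs \<and> infdist (x k) Xs = dist (x k) z)" for k
  have u: "u k \<in> Xs" "dist' k = norm (x k - u k)" for k
    using someI_ex[OF ex_u[of k]] unfolding u_def dist'_def by (auto simp: dist_norm)
  have gu: "g (u k) < \<infinity>" for k using u(1)[of k] unfolding Xs_def subdiff_def by auto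
  have "(\<lambda>k. dist' (Suc k) + D (Suc k) + dist' k) \<longlonglongrightarrow> 0 + 0 + 0"
    unfolding D_def using dist_lim d_lim by (intro tendsto_add LIMSEQ_Suc)
  then have "eventually (\<lambda>k. dist' (Suc k) + D (Suc k) + dist' k < \<delta>) sequentially"
    using delta by (intro order_tendstoD(2)) auto
  then obtain K2 where K2: "\<And>k. k \<ge> K2 \<Longrightarrow> dist' (Suc k) + D (Suc k) + dist' k < \<delta>"
    unfolding eventually_sequentially by blast
  have Fu_step: "Fr (u (Suc k)) = Fr (u k)" if "k \<ge> K2" for k
  proof (rule ccontr)
    assume "Fr (u (Suc k)) \<noteq> Fr (u k)"
    then have "norm (u (Suc k) - u k) \<ge> \<delta>" by (intro sep u(1))
    moreover have "norm (u (Suc k) - u k) \<le> norm (u (Suc k) - x (Suc k)) + norm (x (Suc k) - x k) + norm (x k - u k)"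
    proof -
      have e: "u (Suc k) - u k = (u (Suc k) - x (Suc k)) + (x (Suc k) - x k) + (x k - u k)" by simp
      have n1: "norm ((u (Suc k) - x (Suc k)) + (x (Suc k) - x k) + (x k - u k)) \<le> norm ((u (Suc k) - x (Suc k)) + (x (Suc k) - x k)) + norm (x k - u k)"
        by (rule norm_triangle_ineq)
      have n2: "norm ((u (Suc k) - x (Suc k)) + (x (Suc k) - x k)) \<le> norm (u (Suc k) - x (Suc k)) + norm (x (Suc k) - x k)"
        by (rule norm_triangle_ineq)
      show ?thesis unfolding e using n1 n2 by linarith
    qed
    moreover have "norm (u (Suc k) - x (Suc k)) = dist' (Suc k)" using u(2) by (simp add: norm_minus_commute)
    moreover have "norm (x (Suc k) - x k) = D (Suc k)" unfolding D_def d_suc ..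
    ultimately show False using K2[OF that] u(2)[of k] by linarith
  qed
  define \<zeta> where "\<zeta> = Fr (u K2)"
  have Fu: "Fr (u k) = \<zeta>" if "k \<ge> K2" for k
    using that unfolding \<zeta>_def by (induction k rule: dec_induct) (auto simp: Fu_step)
  have low: "Fr (x k) \<ge> \<zeta> - l / 2 * (dist' k)\<^sup>2" if "k \<ge> K2" for k
    using stat_lower[OF u(1) xfin, of k k] Fu[OF that] u(2)[of k] by simp
  have H_ge: "H k \<ge> \<zeta>" for k
  proof -
    have "(\<lambda>j. \<zeta> - l / 2 * (dist' j)\<^sup>2) \<longlonglongrightarrow> \<zeta> - l / 2 * 0\<^sup>2"
      using dist_lim by (intro tendsto_diff tendsto_mult tendsto_const tendsto_power)
    moreover have "\<forall>j\<ge>max k K2. \<zeta> - l / 2 * (dist' j)\<^sup>2 \<le> H k"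
      using low Fr_le_H H_mono by (meson max.boundedE order_trans)
    ultimately have "\<zeta> - l / 2 * 0\<^sup>2 \<le> H k"
      by (intro LIMSEQ_le_const2[of _ _ "H k"]) (auto intro!: exI[of _ "max k K2"])
    then show ?thesis by simp
  qed
  define r where "r k = H k - \<zeta>" for k
  have r_nn: "r k \<ge> 0" for k using H_ge unfolding r_def by simp
  have r_dec: "r (Suc k) \<le> r k" for k using H_decseq unfolding r_def by simp
  have r_D: "c0 * (D k)\<^sup>2 \<le> r k - r (Suc k)" for k using H_dec[of k] unfolding r_def D_def by simp
  define A where "A = (L + l) * (18 * \<tau>\<^sup>2 + 1) + L / 2"
  have A_pos: "A > 0"
  proof -
    have "(L + l) * (18 * \<tau>\<^sup>2 + 1) \<ge> 0" using L_pos l_nonneg by simp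
    then show ?thesis unfolding A_def using L_pos by simp
  qed
  define K3 where "K3 = max K1 K2"
  have r_up: "r (Suc k) \<le> A * ((D k)\<^sup>2 + (D (Suc k))\<^sup>2)" if k: "k \<ge> K3" for k
  proof -
    have "Fr (x (Suc k)) \<le> Fr (u k) + (L + l) / 2 * (norm (u k - y k))\<^sup>2 - L / 2 * (norm (u k - x (Suc k)))\<^sup>2"
      unfolding x_suc T_def by (rule key_ineq[OF gu])
    moreover have "L / 2 * (norm (u k - x (Suc k)))\<^sup>2 \<ge> 0" using L_pos by simp
    ultimately have 1: "Fr (x (Suc k)) \<le> \<zeta> + (L + l) / 2 * (norm (u k - y k))\<^sup>2"
      using Fu[of k] k unfolding K3_def by simp
    have "norm (u k - y k) \<le> norm (u k - x k) + norm (x k - y k)"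
      using norm_triangle_ineq[of "u k - x k" "x k - y k"] by simp
    also have "\<dots> \<le> dist' k + D k" using u(2)[of k] norm_xy1[of k] unfolding D_def by (simp add: norm_minus_commute)
    finally have "(norm (u k - y k))\<^sup>2 \<le> (dist' k + D k)\<^sup>2" by (intro power_mono) auto
    also have "\<dots> \<le> 2 * (dist' k)\<^sup>2 + 2 * (D k)\<^sup>2" by (rule sum_sq)
    finally have 2: "(norm (u k - y k))\<^sup>2 \<le> 2 * (dist' k)\<^sup>2 + 2 * (D k)\<^sup>2" .
    have "dist' k \<le> \<tau> * (3 * D k + D (Suc k))" using K1[of k] k unfolding K3_def dist'_def D_def by simp
    then have "(dist' k)\<^sup>2 \<le> (\<tau> * (3 * D k + D (Suc k)))\<^sup>2" using dist_nn by (intro power_mono) auto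
    also have "\<dots> = \<tau>\<^sup>2 * (3 * D k + D (Suc k))\<^sup>2" by (simp add: power_mult_distrib)
    finally have h31: "(dist' k)\<^sup>2 \<le> \<tau>\<^sup>2 * (3 * D k + D (Suc k))\<^sup>2" .
    have "(3 * D k + D (Suc k))\<^sup>2 \<le> 2 * (3 * D k)\<^sup>2 + 2 * (D (Suc k))\<^sup>2" by (rule sum_sq)
    then have "(3 * D k + D (Suc k))\<^sup>2 \<le> 18 * (D k)\<^sup>2 + 2 * (D (Suc k))\<^sup>2" by (simp add: power_mult_distrib)
    moreover have "18 * (D k)\<^sup>2 + 2 * (D (Suc k))\<^sup>2 \<le> 18 * ((D k)\<^sup>2 + (D (Suc k))\<^sup>2)"
      by (simp add: distrib_left)
    ultimately have "(3 * D k + D (Suc k))\<^sup>2 \<le> 18 * ((D k)\<^sup>2 + (D (Suc k))\<^sup>2)"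
      by (rule order_trans)
    then have "\<tau>\<^sup>2 * (3 * D k + D (Suc k))\<^sup>2 \<le> \<tau>\<^sup>2 * (18 * ((D k)\<^sup>2 + (D (Suc k))\<^sup>2))"
      by (intro mult_left_mono) auto
    with h31 have "(dist' k)\<^sup>2 \<le> \<tau>\<^sup>2 * (18 * ((D k)\<^sup>2 + (D (Suc k))\<^sup>2))" by linarith
    then have 3: "(dist' k)\<^sup>2 \<le> 18 * \<tau>\<^sup>2 * ((D k)\<^sup>2 + (D (Suc k))\<^sup>2)" by (simp add: algebra_simps)
    define S where "S = (D k)\<^sup>2 + (D (Suc k))\<^sup>2"
    have S: "(D k)\<^sup>2 \<le> S" "(D (Suc k))\<^sup>2 \<le> S" unfolding S_def by auto
    have h3b: "(dist' k)\<^sup>2 \<le> 18 * \<tau>\<^sup>2 * S" using 3 unfolding S_def .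
    have "(norm (u k - y k))\<^sup>2 \<le> 2 * (18 * \<tau>\<^sup>2 * S) + 2 * S" using 2 h3b S by linarith
    then have "(L + l) / 2 * (norm (u k - y k))\<^sup>2 \<le> (L + l) / 2 * (2 * (18 * \<tau>\<^sup>2 * S) + 2 * S)"
      using L_pos l_nonneg by (intro mult_left_mono) auto
    also have "\<dots> = (L + l) * (18 * \<tau>\<^sup>2 + 1) * S" by (simp add: field_simps)
    finally have 4: "(L + l) / 2 * (norm (u k - y k))\<^sup>2 \<le> (L + l) * (18 * \<tau>\<^sup>2 + 1) * S" .
    have 5: "L / 2 * (D (Suc k))\<^sup>2 \<le> L / 2 * S" using S L_pos by (intro mult_left_mono) auto
    have "r (Suc k) = Fr (x (Suc k)) + L / 2 * (D (Suc k))\<^sup>2 - \<zeta>" unfolding r_def H_def D_def by simp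
    also have "\<dots> \<le> (L + l) * (18 * \<tau>\<^sup>2 + 1) * S + L / 2 * S" using 1 4 5 by linarith
    also have "\<dots> = A * S" unfolding A_def by (simp add: field_simps)
    finally show ?thesis unfolding S_def .
  qed
  define q where "q = A / (A + c0)"
  have q: "0 < q" "q < 1" unfolding q_def using A_pos c0_pos by auto
  have r_step: "r (k + 2) \<le> q * r k" if k: "k \<ge> K3" for k
  proof -
    have "c0 * r (Suc k) \<le> A * (c0 * (D k)\<^sup>2 + c0 * (D (Suc k))\<^sup>2)"
    proof -
      have "c0 * r (Suc k) \<le> c0 * (A * ((D k)\<^sup>2 + (D (Suc k))\<^sup>2))" using r_up[OF k] c0_pos by (intro mult_left_mono) auto
      then show ?thesis by (simp add: algebra_simps)
    qed
    also have "\<dots> \<le> A * ((r k - r (Suc k)) + (r (Suc k) - r (Suc (Suc k))))"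
      using r_D[of k] r_D[of "Suc k"] A_pos by (intro mult_left_mono) auto
    finally have "c0 * r (Suc k) \<le> A * (r k - r (Suc (Suc k)))" by simp
    moreover have "c0 * r (Suc (Suc k)) \<le> c0 * r (Suc k)" using r_dec c0_pos by (intro mult_left_mono) auto
    ultimately have "c0 * r (Suc (Suc k)) + A * r (Suc (Suc k)) \<le> A * r k" by (simp add: algebra_simps)
    then have "(A + c0) * r (k + 2) \<le> A * r k" by (simp add: algebra_simps)
    then show ?thesis unfolding q_def using A_pos c0_pos by (simp add: field_simps)
  qed
  obtain C where C: "\<And>k. r k \<le> C * sqrt q ^ k"
    using two_step[OF q r_dec r_step r_nn] by blast
  define s where "s = sqrt q"
  have s: "0 < s" "s < 1" unfolding s_def using q by auto
  have C0: "C \<ge> 0" using C[of 0] r_nn[of 0] by simp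
  define \<rho> where "\<rho> = sqrt s"
  have \<rho>: "0 < \<rho>" "\<rho> < 1" unfolding \<rho>_def using s by auto
  have \<rho>2: "\<rho>\<^sup>2 = s" unfolding \<rho>_def using s by simp
  define C1 where "C1 = sqrt (C / c0)"
  have dbound: "norm (x (Suc k) - x k) \<le> C1 * \<rho> ^ k" for k
  proof -
    have "c0 * (D (Suc k))\<^sup>2 \<le> r (Suc k)" using r_D[of "Suc k"] r_nn[of "Suc (Suc k)"] by simp
    also have "\<dots> \<le> r k" by (rule r_dec)
    also have "\<dots> \<le> C * s ^ k" using C unfolding s_def .
    finally have "(D (Suc k))\<^sup>2 \<le> C / c0 * s ^ k" using c0_pos by (simp add: field_simps)
    then have "sqrt ((D (Suc k))\<^sup>2) \<le> sqrt (C / c0 * s ^ k)" by (rule real_sqrt_le_mono)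
    also have "sqrt (C / c0 * s ^ k) = C1 * \<rho> ^ k" unfolding C1_def \<rho>_def by (simp only: real_sqrt_mult real_sqrt_power)
    finally show ?thesis unfolding D_def d_suc by simp
  qed
  obtain xs where xs: "x \<longlonglongrightarrow> xs" "\<And>k. norm (x k - xs) \<le> C1 / (1 - \<rho>) * \<rho> ^ k"
    using geom_conv[of \<rho> x C1] \<rho> dbound by auto
  have "y \<longlonglongrightarrow> xs"
  proof -
    have "(\<lambda>k. x k - y k) \<longlonglongrightarrow> 0"
    proof (rule tendsto_norm_zero_cancel)
      have e1: "\<forall>\<^sub>F k in sequentially. 0 \<le> norm (x k - y k)" by simp
      have e2: "\<forall>\<^sub>F k in sequentially. norm (x k - y k) \<le> norm (d k)" using norm_xy1 by simp
      show "(\<lambda>k. norm (x k - y k)) \<longlonglongrightarrow> 0" by (rule tendsto_sandwich[OF e1 e2 tendsto_const d_lim])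
    qed
    then have "(\<lambda>k. x k - (x k - y k)) \<longlonglongrightarrow> xs - 0" by (intro tendsto_diff xs(1))
    then show ?thesis by simp
  qed
  then have "(\<lambda>k. T (y k)) \<longlonglongrightarrow> T xs"
    using T_cont by (intro continuous_on_tendsto_compose[of UNIV T]) auto
  then have "(\<lambda>k. x (Suc k)) \<longlonglongrightarrow> T xs" unfolding x_suc .
  moreover have "(\<lambda>k. x (Suc k)) \<longlonglongrightarrow> xs" using xs(1) by (rule LIMSEQ_Suc)
  ultimately have "T xs = xs" by (rule LIMSEQ_unique)
  then have xsX: "xs \<in> Xs" using Xs_iff by simp
  have part1: "limsup (\<lambda>k. ereal (root k (norm (x k - xs)))) < 1"
    by (rule rlin[OF norm_ge_zero xs(2) \<rho>])
  define C2 where "C2 = C1 / (1 - \<rho>)"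
  have Fb: "\<bar>Fr (x k) - \<zeta>\<bar> \<le> (C + l / 2 * C2\<^sup>2) * s ^ k" if k: "k \<ge> K2" for k
  proof -
    have up: "Fr (x k) - \<zeta> \<le> C * s ^ k" using Fr_le_H[of k] C[of k] unfolding r_def s_def by simp
    have "dist' k \<le> norm (x k - xs)" unfolding dist'_def using infdist_le[OF xsX, of "x k"] by (simp add: dist_norm)
    also have "\<dots> \<le> C2 * \<rho> ^ k" using xs(2) unfolding C2_def .
    finally have "(dist' k)\<^sup>2 \<le> (C2 * \<rho> ^ k)\<^sup>2" using dist_nn by (intro power_mono) auto
    also have "(C2 * \<rho> ^ k)\<^sup>2 = C2\<^sup>2 * s ^ k"
    proof -
      have "(\<rho> ^ k)\<^sup>2 = (\<rho>\<^sup>2) ^ k" by (simp only: power2_eq_square power_mult_distrib)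
      then show ?thesis using \<rho>2 by (simp add: power_mult_distrib)
    qed
    finally have "l / 2 * (dist' k)\<^sup>2 \<le> l / 2 * (C2\<^sup>2 * s ^ k)" using l_nonneg by (intro mult_left_mono) auto
    then have lo: "\<zeta> - Fr (x k) \<le> l / 2 * C2\<^sup>2 * s ^ k" using low[OF k] by simp
    have "0 \<le> C * s ^ k" "0 \<le> l / 2 * C2\<^sup>2 * s ^ k" using C0 s l_nonneg by auto
    then show ?thesis using up lo by (simp add: algebra_simps abs_le_iff)
  qed
  obtain C3 where C3: "\<And>k. \<bar>Fr (x k) - \<zeta>\<bar> \<le> C3 * s ^ k" using geom_all[OF s(1) Fb] by blast
  have part2: "limsup (\<lambda>k. ereal (root k \<bar>Fr (x k) - \<zeta>\<bar>)) < 1"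
    by (rule rlin[OF abs_ge_zero C3 s])
  show ?thesis using part1 part2 xsX by blast
qed

end

theorem theorem3p7:
  fixes g :: "'a::euclidean_space \<Rightarrow> ereal"
    and f1 f2 :: "'a \<Rightarrow> real"
    and df1 df2 :: "'a \<Rightarrow> 'a"
    and L l :: real
    and x :: "nat \<Rightarrow> 'a"
    and \<beta> :: "nat \<Rightarrow> real"
  defines "F \<equiv> (\<lambda>z. ereal (f1 z - f2 z) + g z)"
    and "gradf \<equiv> (\<lambda>z. df1 z - df2 z)"
    and "Xstat \<equiv> {z. - (df1 z - df2 z) \<in> subdiff g z}"
  assumes g_proper: "proper_fun g" and g_closed: "closed_efun g" and g_convex: "convex_efun g"
    and f1_convex: "convex_on UNIV f1" and f2_convex: "convex_on UNIV f2"
    and f1_grad: "\<And>z. (f1 has_derivative (\<lambda>h. df1 z \<bullet> h)) (at z)"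
    and f2_grad: "\<And>z. (f2 has_derivative (\<lambda>h. df2 z \<bullet> h)) (at z)"
    and L_pos: "L > 0" and l_nonneg: "l \<ge> 0" and L_ge_l: "L \<ge> l"
    and f1_lip: "\<And>u v. norm (df1 u - df1 v) \<le> L * norm (u - v)"
    and f2_lip: "\<And>u v. norm (df2 u - df2 v) \<le> l * norm (u - v)"
    and inf_bounded: "Inf (range F) > -\<infinity>"
    and inf_attained: "\<exists>z0. \<forall>z. F z0 \<le> F z"
    and error_bound: "\<And>\<xi>::real. ereal \<xi> \<ge> Inf (range F) \<Longrightarrow>
          \<exists>\<epsilon>>0. \<exists>\<tau>>0. \<forall>z. norm (prox (1/L) g (z - (1/L) *\<^sub>R gradf z) - z) < \<epsilon> \<and> F z \<le> ereal \<xi>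
              \<longrightarrow> infdist z Xstat \<le> \<tau> * norm (prox (1/L) g (z - (1/L) *\<^sub>R gradf z) - z)"
    and separation: "\<exists>\<delta>>0. \<forall>u\<in>Xstat. \<forall>v\<in>Xstat. F u \<noteq> F v \<longrightarrow> norm (u - v) \<ge> \<delta>"
    and x0_dom: "g (x 0) < \<infinity>"
    and beta_range: "\<And>k. 0 \<le> \<beta> k \<and> \<beta> k \<le> sqrt (L / (L + l))"
    and beta_sup: "\<exists>b < sqrt (L / (L + l)). \<forall>k. \<beta> k \<le> b"
    and iter: "\<And>k. x (Suc k) = prox (1/L) g
                 ((x k + \<beta> k *\<^sub>R (x k - x (k - 1)))
                  - (1/L) *\<^sub>R gradf (x k + \<beta> k *\<^sub>R (x k - x (k - 1))))"
  shows "(\<exists>xs\<in>Xstat. limsup (\<lambda>k. ereal (root k (norm (x k - xs)))) < 1)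
       \<and> (\<forall>k. F (x k) < \<infinity>)
       \<and> (\<exists>\<zeta>::real. limsup (\<lambda>k. ereal (root k \<bar>real_of_ereal (F (x k)) - \<zeta>\<bar>)) < 1)"
proof -
  obtain m :: real where m: "ereal m \<le> Inf (range F)"
    using inf_bounded by (cases "Inf (range F)") auto
  have Fm: "ereal m \<le> ereal (f1 z - f2 z) + g z" for z
    using m Inf_lower[of "F z" "range F"] unfolding F_def by auto
  interpret pg g f1 f2 df1 df2 L l m
    by unfold_locales (use g_proper g_closed g_convex f1_convex f2_convex f1_grad f2_grad L_pos
        l_nonneg L_ge_l f1_lip f2_lip Fm in auto)
  have Feq: "F z = ereal (Fr z)" if "g z < \<infinity>" for z
    using g_fin[OF that] unfolding F_def Fr_def f_def by simp
  have XX: "Xstat = Xs" unfolding Xstat_def Xs_def gf_def ..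
  have TT: "prox (1/L) g (z - (1/L) *\<^sub>R gradf z) = T z" for z
    unfolding T_def P_def gf_def gradf_def ..
  obtain b where b: "b < sqrt (L / (L + l))" "\<And>k. \<beta> k \<le> b" using beta_sup by blast
  have "Inf (range F) \<le> F (x 0)" by (rule Inf_lower) (rule rangeI)
  then have "ereal (Fr (x 0)) \<ge> Inf (range F)" using Feq[OF x0_dom] by simp
  then obtain \<epsilon> \<tau> where et: "\<epsilon> > 0" "\<tau> > 0"
    "\<And>z. norm (T z - z) < \<epsilon> \<and> F z \<le> ereal (Fr (x 0)) \<Longrightarrow> infdist z Xs \<le> \<tau> * norm (T z - z)"
    using error_bound[of "Fr (x 0)"] unfolding TT XX by blast
  obtain \<delta> where dl: "\<delta> > 0" "\<And>u v. u \<in> Xs \<Longrightarrow> v \<in> Xs \<Longrightarrow> F u \<noteq> F v \<Longrightarrow> norm (u - v) \<ge> \<delta>"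
    using separation unfolding XX by blast
  have gX: "g u < \<infinity>" if "u \<in> Xs" for u using that unfolding Xs_def subdiff_def by auto
  obtain z0 where z0: "\<And>z. F z0 \<le> F z" using inf_attained by blast
  have gz0: "g z0 < \<infinity>"
  proof (rule ccontr)
    assume "\<not> g z0 < \<infinity>"
    then have "F z0 = \<infinity>" unfolding F_def by simp
    then show False using z0[of "x 0"] Feq[OF x0_dom] by simp
  qed
  have "z0 \<in> Xs"
  proof (rule min_imp_stat[OF gz0])
    fix y assume "g y < \<infinity>"
    then show "Fr z0 \<le> Fr y" using z0[of y] Feq[OF gz0] Feq[of y] by simp
  qed
  then have Xne: "Xs \<noteq> {}" by blast
  interpret pgseq g f1 f2 df1 df2 L l m x \<beta> b \<epsilon> \<tau> \<delta>
  proof unfold_locales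
    show "g (x 0) < \<infinity>" by (rule x0_dom)
    show "0 \<le> \<beta> k \<and> \<beta> k \<le> b" for k using beta_range[of k] b(2)[of k] by simp
    show "b < sqrt (L / (L + l))" by (rule b(1))
    show "x (Suc k) = P (x k + \<beta> k *\<^sub>R (x k - x (k - 1)) - (1 / L) *\<^sub>R gf (x k + \<beta> k *\<^sub>R (x k - x (k - 1))))" for k
      using iter[of k] unfolding P_def gf_def gradf_def .
    show "\<epsilon> > 0" "\<tau> > 0" "\<delta> > 0" using et dl by auto
    show "infdist z Xs \<le> \<tau> * norm (T z - z)" if "norm (T z - z) < \<epsilon>" "g z < \<infinity>" "Fr z \<le> Fr (x 0)" for z
      using et(3)[of z] that Feq[OF that(2)] by simp
    show "norm (u - v) \<ge> \<delta>" if "u \<in> Xs" "v \<in> Xs" "Fr u \<noteq> Fr v" for u v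
      using dl(2)[OF that(1,2)] that Feq[OF gX[OF that(1)]] Feq[OF gX[OF that(2)]] by simp
    show "Xs \<noteq> {}" by (rule Xne)
  qed
  have Fx: "F (x k) = ereal (Fr (x k))" for k by (rule Feq[OF xfin])
  show ?thesis using main unfolding XX Fx by simp
qed

end
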